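(* Let $A$ be a unique factorization domain and $B$ a commutative ring containing $A$ as a subring, such that $B$ is a flat and torsion-free $A$-module and $A^*=A\cap B^*$. Then, inside the ring $A_*^{-1}B$ (which contains both $B$ and the fraction field $A_*^{-1}A$ of $A$), one has $B\cap (A_*^{-1}A)=A$; equivalently, the $A$-module $B/A$ is torsion free.
   Context: For a ring $R$, $R^*$ denotes its group of units and $R_*=R\setminus\{0\}$; $A_*^{-1}A$ is the field of fractions of $A$. *)

theory Defs
  imports "HOL-Algebra.Algebra"
begin

text \<open>Throughout, B is a commutative ring (HOL-Algebra record) and A a subset of its
carrier which is a subring; B is regarded as an A-module via the multiplication of B.\<close>

definition torsion_free_over :: "'a set \<Rightarrow> ('a, 'b) ring_scheme \<Rightarrow> bool" where
  "torsion_free_over A B \<longleftrightarrow>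
     (\<forall>s \<in> A. \<forall>b \<in> carrier B. s \<noteq> \<zero>\<^bsub>B\<^esub> \<longrightarrow> s \<otimes>\<^bsub>B\<^esub> b = \<zero>\<^bsub>B\<^esub> \<longrightarrow> b = \<zero>\<^bsub>B\<^esub>)"

text \<open>Flatness of B as an A-module, via the equational criterion (every A-linear relation
among elements of B is trivial, i.e. comes from relations in A).\<close>

definition flat_over :: "'a set \<Rightarrow> ('a, 'b) ring_scheme \<Rightarrow> bool" where
  "flat_over A B \<longleftrightarrow>
     (\<forall>(n::nat) a b. (\<forall>i<n. a i \<in> A) \<longrightarrow> (\<forall>i<n. b i \<in> carrier B) \<longrightarrow>
        finsum B (\<lambda>i. a i \<otimes>\<^bsub>B\<^esub> b i) {..<n} = \<zero>\<^bsub>B\<^esub> \<longrightarrow>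
        (\<exists>(m::nat) c y. (\<forall>i<n. \<forall>j<m. c i j \<in> A) \<and> (\<forall>j<m. y j \<in> carrier B) \<and>
           (\<forall>i<n. b i = finsum B (\<lambda>j. c i j \<otimes>\<^bsub>B\<^esub> y j) {..<m}) \<and>
           (\<forall>j<m. finsum B (\<lambda>i. a i \<otimes>\<^bsub>B\<^esub> c i j) {..<n} = \<zero>\<^bsub>B\<^esub>)))"

end

theory Submission
  imports Defs
begin

lemma (in factorial_domain) exists_prime_divisor:
  assumes "a \<in> carrier R - { \<zero> }" and "a \<notin> Units R"
  obtains p where "p \<in> carrier R" "p \<noteq> \<zero>" "prime R p" "p divides a"
proof -
  obtain fs where set_fs: "set fs \<subseteq> carrier (mult_of R)" and "wfactors (mult_of R) fs a"
    using wfactors_exist assms by auto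
  hence "a \<in> Units R" if "fs = []"
    using that assms(1) Units_cong assoc_iff_assoc_mult unfolding wfactors_def by (simp, blast)
  hence "fs \<noteq> []"
    using assms(2) by auto
  then obtain f' fs' where fs: "fs = f' # fs'"
    using list.exhaust by blast
  from \<open>wfactors (mult_of R) fs a\<close> have "f' divides\<^bsub>mult_of R\<^esub> a"
    using mult_of.wfactors_dividesI[OF _ set_fs] assms(1) unfolding fs by auto
  moreover have "irreducible (mult_of R) f'"
    using \<open>wfactors (mult_of R) fs a\<close> unfolding fs wfactors_def by auto
  moreover have f'c: "f' \<in> carrier R" "f' \<noteq> \<zero>" using set_fs fs by auto
  ultimately have "prime (mult_of R) f'"
    using irreducible_prime by auto
  hence "prime R f'" using prime_eq_prime_mult f'c by auto
  with that f'c \<open>f' divides\<^bsub>mult_of R\<^esub> a\<close> show ?thesis by auto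
qed


theorem mainTheorem2:
  fixes B :: "('a, 'b) ring_scheme" and A :: "'a set"
  assumes "cring B"
    and "subring A B"
    and "factorial_domain (B\<lparr>carrier := A\<rparr>)"
    and "flat_over A B"
    and "torsion_free_over A B"
    and "Units (B\<lparr>carrier := A\<rparr>) = A \<inter> Units B"
  shows "\<forall>b \<in> carrier B. \<forall>s \<in> A. s \<noteq> \<zero>\<^bsub>B\<^esub> \<longrightarrow> s \<otimes>\<^bsub>B\<^esub> b \<in> A \<longrightarrow> b \<in> A"
proof -
  let ?R = "B\<lparr>carrier := A\<rparr>"
  interpret B: cring B by fact
  interpret R: factorial_domain ?R by fact
  have AB: "A \<subseteq> carrier B" using subringE(1)[OF assms(2)] .
  have A0: "\<zero>\<^bsub>B\<^esub> \<in> A" using subringE(2)[OF assms(2)] .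
  have A1: "\<one>\<^bsub>B\<^esub> \<in> A" using subringE(3)[OF assms(2)] .
  have Aneg: "\<And>h. h \<in> A \<Longrightarrow> \<ominus>\<^bsub>B\<^esub> h \<in> A" using subringE(5)[OF assms(2)] .
  have Amul: "\<And>x y. x \<in> A \<Longrightarrow> y \<in> A \<Longrightarrow> x \<otimes>\<^bsub>B\<^esub> y \<in> A" using subringE(6)[OF assms(2)] .
  have Rz: "\<zero>\<^bsub>?R\<^esub> = \<zero>\<^bsub>B\<^esub>" by simp
  have main: "\<forall>b\<in>carrier B. s \<otimes>\<^bsub>B\<^esub> b \<in> A \<longrightarrow> b \<in> A"
    if "s \<in> carrier (mult_of ?R)" for s
    using R.division_wellfounded that
  proof (induct s rule: wf_induct_rule)
    case (less s)
    have sA: "s \<in> A" and s0: "s \<noteq> \<zero>\<^bsub>B\<^esub>" using less.prems by auto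
    show ?case
    proof (intro ballI impI)
      fix b assume bB: "b \<in> carrier B" and aA: "s \<otimes>\<^bsub>B\<^esub> b \<in> A"
      define a where "a = s \<otimes>\<^bsub>B\<^esub> b"
      have aA': "a \<in> A" using aA a_def by simp
      have sB: "s \<in> carrier B" using sA AB by auto
      show "b \<in> A"
      proof (cases "s \<in> Units ?R")
        case True
        then obtain t where tA: "t \<in> A" and ts: "t \<otimes>\<^bsub>B\<^esub> s = \<one>\<^bsub>B\<^esub>"
          unfolding Units_def by auto
        have tB: "t \<in> carrier B" using tA AB by auto
        have "t \<otimes>\<^bsub>B\<^esub> a = (t \<otimes>\<^bsub>B\<^esub> s) \<otimes>\<^bsub>B\<^esub> b"
          unfolding a_def using tB sB bB by (simp add: B.m_assoc)
        also have "\<dots> = b" using ts bB by simp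
        finally have "b = t \<otimes>\<^bsub>B\<^esub> a" by simp
        then show ?thesis using Amul[OF tA aA'] by simp
      next
        case False
        have sR: "s \<in> carrier ?R - {\<zero>\<^bsub>?R\<^esub>}" using sA s0 by simp
        obtain p where pA': "p \<in> carrier ?R" and p0': "p \<noteq> \<zero>\<^bsub>?R\<^esub>" and pp: "prime ?R p"
          and pd: "p divides\<^bsub>?R\<^esub> s"
          by (rule R.exists_prime_divisor[OF sR False])
        have pA: "p \<in> A" and p0: "p \<noteq> \<zero>\<^bsub>B\<^esub>" using pA' p0' by simp_all
        obtain s' where s'A: "s' \<in> A" and ss': "s = p \<otimes>\<^bsub>B\<^esub> s'"
          using pd unfolding factor_def by auto
        have pB: "p \<in> carrier B" and s'B: "s' \<in> carrier B" using pA s'A AB by auto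
        have s'0: "s' \<noteq> \<zero>\<^bsub>B\<^esub>" using ss' s0 pB by auto
        have pnu: "p \<notin> Units ?R" using pp unfolding prime_def by auto
        show ?thesis
        proof (cases "a = \<zero>\<^bsub>B\<^esub>")
          case True
          then have "b = \<zero>\<^bsub>B\<^esub>" using assms(5) sA bB s0 unfolding torsion_free_over_def a_def by blast
          then show ?thesis using A0 by simp
        next
          case anz: False
          show ?thesis
          proof (cases "p divides\<^bsub>?R\<^esub> a")
            case True
            then obtain a' where a'A: "a' \<in> A" and aa': "a = p \<otimes>\<^bsub>B\<^esub> a'"
              unfolding factor_def by auto
            have a'B: "a' \<in> carrier B" using a'A AB by auto
            have aB: "a \<in> carrier B" using aA' AB by auto
            have "p \<otimes>\<^bsub>B\<^esub> (s' \<otimes>\<^bsub>B\<^esub> b \<ominus>\<^bsub>B\<^esub> a') = (p \<otimes>\<^bsub>B\<^esub> s') \<otimes>\<^bsub>B\<^esub> b \<ominus>\<^bsub>B\<^esub> p \<otimes>\<^bsub>B\<^esub> a'"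
              using pB s'B bB a'B by (simp add: B.minus_eq B.r_distr B.r_minus B.m_assoc)
            also have "\<dots> = a \<ominus>\<^bsub>B\<^esub> a" using ss' aa' a_def by simp
            also have "\<dots> = \<zero>\<^bsub>B\<^esub>" using aB by (simp add: B.minus_eq B.r_neg)
            finally have "p \<otimes>\<^bsub>B\<^esub> (s' \<otimes>\<^bsub>B\<^esub> b \<ominus>\<^bsub>B\<^esub> a') = \<zero>\<^bsub>B\<^esub>" .
            then have "s' \<otimes>\<^bsub>B\<^esub> b \<ominus>\<^bsub>B\<^esub> a' = \<zero>\<^bsub>B\<^esub>"
              using assms(5) pA p0 s'B bB a'B unfolding torsion_free_over_def by blast
            then have eq: "s' \<otimes>\<^bsub>B\<^esub> b = a'"
              using s'B bB a'B B.r_right_minus_eq[of "s' \<otimes>\<^bsub>B\<^esub> b" a'] by simp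
            have s'M: "s' \<in> carrier (mult_of ?R)" using s'A s'0 by simp
            have pM: "p \<in> carrier (mult_of ?R)" using pA p0 by simp
            have sM: "s \<in> carrier (mult_of ?R)" using sA s0 by simp
            have pnu': "p \<notin> Units (mult_of ?R)" using pnu by simp
            have ss'': "s = s' \<otimes>\<^bsub>?R\<^esub> p" using ss' B.m_comm[OF pB s'B] by simp
            have "properfactor (mult_of ?R) s' s"
              by (rule R.mult_of.properfactorI3[OF ss'' pnu' s'M pM])
            then have rel: "(s', s) \<in> {(x, y). x \<in> carrier (mult_of ?R) \<and> y \<in> carrier (mult_of ?R) \<and> properfactor (mult_of ?R) x y}"
              using s'M sM by blast
            have "\<forall>b\<in>carrier B. s' \<otimes>\<^bsub>B\<^esub> b \<in> A \<longrightarrow> b \<in> A"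
              by (rule less.hyps[OF rel s'M])
            then have "s' \<otimes>\<^bsub>B\<^esub> b \<in> A \<longrightarrow> b \<in> A" using bB by blast
            then show ?thesis using eq a'A by blast
          next
            case ndiv: False
            define av where "av = (\<lambda>i::nat. if i = 0 then a else \<ominus>\<^bsub>B\<^esub> s)"
            define bv where "bv = (\<lambda>i::nat. if i = 0 then \<one>\<^bsub>B\<^esub> else b)"
            have avA: "\<forall>i<2. av i \<in> A" using aA' Aneg sA unfolding av_def by auto
            have bvB: "\<forall>i<2. bv i \<in> carrier B" using bB unfolding bv_def by auto
            have two: "{..<2::nat} = insert 1 {0}" by auto
            have aB0: "a \<in> carrier B" using aA' AB by auto
            have f01: "(\<lambda>i. av i \<otimes>\<^bsub>B\<^esub> bv i) \<in> {..<2} \<rightarrow> carrier B"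
              using avA bvB AB by auto
            have "finsum B (\<lambda>i. av i \<otimes>\<^bsub>B\<^esub> bv i) {..<2} = av 1 \<otimes>\<^bsub>B\<^esub> bv 1 \<oplus>\<^bsub>B\<^esub> finsum B (\<lambda>i. av i \<otimes>\<^bsub>B\<^esub> bv i) {0}"
              unfolding two using f01 unfolding two by (intro B.finsum_insert) auto
            also have "\<dots> = av 1 \<otimes>\<^bsub>B\<^esub> bv 1 \<oplus>\<^bsub>B\<^esub> av 0 \<otimes>\<^bsub>B\<^esub> bv 0"
            proof -
              have "av 0 \<otimes>\<^bsub>B\<^esub> bv 0 \<in> carrier B" using f01 by auto
              then show ?thesis by (simp add: B.finsum_insert)
            qed
            also have "\<dots> = (\<ominus>\<^bsub>B\<^esub> a) \<oplus>\<^bsub>B\<^esub> a"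
              unfolding av_def bv_def a_def using sB bB by (simp add: B.l_minus)
            also have "\<dots> = \<zero>\<^bsub>B\<^esub>" using aB0 by (simp add: B.l_neg)
            finally have sum0: "finsum B (\<lambda>i. av i \<otimes>\<^bsub>B\<^esub> bv i) {..<2} = \<zero>\<^bsub>B\<^esub>" .
            have fl: "\<forall>(n::nat) a b. (\<forall>i<n. a i \<in> A) \<longrightarrow> (\<forall>i<n. b i \<in> carrier B) \<longrightarrow>
              finsum B (\<lambda>i. a i \<otimes>\<^bsub>B\<^esub> b i) {..<n} = \<zero>\<^bsub>B\<^esub> \<longrightarrow>
              (\<exists>(m::nat) c y. (\<forall>i<n. \<forall>j<m. c i j \<in> A) \<and> (\<forall>j<m. y j \<in> carrier B) \<and>
              (\<forall>i<n. b i = finsum B (\<lambda>j. c i j \<otimes>\<^bsub>B\<^esub> y j) {..<m}) \<and>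
              (\<forall>j<m. finsum B (\<lambda>i. a i \<otimes>\<^bsub>B\<^esub> c i j) {..<n} = \<zero>\<^bsub>B\<^esub>))"
              using assms(4) unfolding flat_over_def by simp
            have ex: "\<exists>(m::nat) c y. (\<forall>i<2. \<forall>j<m. c i j \<in> A) \<and> (\<forall>j<m. y j \<in> carrier B) \<and>
              (\<forall>i<2. bv i = finsum B (\<lambda>j. c i j \<otimes>\<^bsub>B\<^esub> y j) {..<m}) \<and>
              (\<forall>j<m. finsum B (\<lambda>i. av i \<otimes>\<^bsub>B\<^esub> c i j) {..<2} = \<zero>\<^bsub>B\<^esub>)"
              using mp[OF mp[OF mp[OF spec[OF spec[OF spec[OF fl, of 2], of av], of bv] avA] bvB] sum0] .
            from ex obtain m :: nat and c y where cA: "\<forall>i<2. \<forall>j<m. c i j \<in> A" and yB: "\<forall>j<m. y j \<in> carrier B"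
              and bc: "\<forall>i<2. bv i = finsum B (\<lambda>j. c i j \<otimes>\<^bsub>B\<^esub> y j) {..<m}"
              and rel: "\<forall>j<m. finsum B (\<lambda>i. av i \<otimes>\<^bsub>B\<^esub> c i j) {..<2} = \<zero>\<^bsub>B\<^esub>" by blast
            have "\<exists>d\<in>A. c 0 j = p \<otimes>\<^bsub>B\<^esub> d" if j: "j < m" for j
            proof -
              have c0: "c 0 j \<in> A" and c1: "c 1 j \<in> A" using cA j by auto
              have c0B: "c 0 j \<in> carrier B" and c1B: "c 1 j \<in> carrier B" using c0 c1 AB by auto
              have aB: "a \<in> carrier B" using aA' AB by auto
              have g01: "(\<lambda>i. av i \<otimes>\<^bsub>B\<^esub> c i j) \<in> {..<2} \<rightarrow> carrier B"
                using avA cA j AB by (intro Pi_I B.m_closed) auto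
              have "\<zero>\<^bsub>B\<^esub> = finsum B (\<lambda>i. av i \<otimes>\<^bsub>B\<^esub> c i j) {..<2}"
                using rel j by simp
              also have "\<dots> = av 1 \<otimes>\<^bsub>B\<^esub> c 1 j \<oplus>\<^bsub>B\<^esub> finsum B (\<lambda>i. av i \<otimes>\<^bsub>B\<^esub> c i j) {0}"
                using g01 unfolding two by (intro B.finsum_insert) auto
              also have "\<dots> = av 1 \<otimes>\<^bsub>B\<^esub> c 1 j \<oplus>\<^bsub>B\<^esub> av 0 \<otimes>\<^bsub>B\<^esub> c 0 j"
              proof -
                have "av 0 \<otimes>\<^bsub>B\<^esub> c 0 j \<in> carrier B" using g01 by auto
                then show ?thesis by (simp add: B.finsum_insert)
              qed
              also have "\<dots> = \<ominus>\<^bsub>B\<^esub> (s \<otimes>\<^bsub>B\<^esub> c 1 j) \<oplus>\<^bsub>B\<^esub> a \<otimes>\<^bsub>B\<^esub> c 0 j"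
                unfolding av_def using sB c1B by (simp add: B.l_minus)
              also have "\<dots> = a \<otimes>\<^bsub>B\<^esub> c 0 j \<ominus>\<^bsub>B\<^esub> s \<otimes>\<^bsub>B\<^esub> c 1 j"
                using aB sB c0B c1B by (simp add: B.minus_eq B.a_comm)
              finally have "a \<otimes>\<^bsub>B\<^esub> c 0 j \<ominus>\<^bsub>B\<^esub> s \<otimes>\<^bsub>B\<^esub> c 1 j = \<zero>\<^bsub>B\<^esub>" by simp
              then have "a \<otimes>\<^bsub>B\<^esub> c 0 j = s \<otimes>\<^bsub>B\<^esub> c 1 j"
                using aB sB c0B c1B B.r_right_minus_eq[of "a \<otimes>\<^bsub>B\<^esub> c 0 j" "s \<otimes>\<^bsub>B\<^esub> c 1 j"] by simp
              then have "a \<otimes>\<^bsub>B\<^esub> c 0 j = p \<otimes>\<^bsub>B\<^esub> (s' \<otimes>\<^bsub>B\<^esub> c 1 j)"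
                using ss' pB s'B c1B by (simp add: B.m_assoc)
              then have "p divides\<^bsub>?R\<^esub> (a \<otimes>\<^bsub>?R\<^esub> c 0 j)"
                unfolding factor_def using s'A c1 Amul by auto
              then have "p divides\<^bsub>?R\<^esub> c 0 j"
                using pp ndiv aA' c0 unfolding prime_def by auto
              then show ?thesis unfolding factor_def by auto
            qed
            then have "\<forall>j. \<exists>d. j < m \<longrightarrow> d \<in> A \<and> c 0 j = p \<otimes>\<^bsub>B\<^esub> d" by blast
            then obtain d where dd: "\<forall>j. j < m \<longrightarrow> d j \<in> A \<and> c 0 j = p \<otimes>\<^bsub>B\<^esub> d j"
              by (rule choice_iff[THEN iffD1, elim_format]) blast
            have dA: "\<forall>j<m. d j \<in> A" and cd: "\<forall>j<m. c 0 j = p \<otimes>\<^bsub>B\<^esub> d j" using dd by auto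
            have dB: "\<forall>j<m. d j \<in> carrier B" using dA AB by auto
            have "\<one>\<^bsub>B\<^esub> = finsum B (\<lambda>j. c 0 j \<otimes>\<^bsub>B\<^esub> y j) {..<m}"
              using bc[rule_format, of 0] unfolding bv_def by simp
            also have "\<dots> = finsum B (\<lambda>j. p \<otimes>\<^bsub>B\<^esub> (d j \<otimes>\<^bsub>B\<^esub> y j)) {..<m}"
              using cd dB yB pB by (intro B.finsum_cong') (auto simp: B.m_assoc)
            also have "\<dots> = p \<otimes>\<^bsub>B\<^esub> finsum B (\<lambda>j. d j \<otimes>\<^bsub>B\<^esub> y j) {..<m}"
              using dB yB pB by (intro B.finsum_rdistr[symmetric]) auto
            finally have one: "\<one>\<^bsub>B\<^esub> = p \<otimes>\<^bsub>B\<^esub> finsum B (\<lambda>j. d j \<otimes>\<^bsub>B\<^esub> y j) {..<m}" .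
            define x where "x = finsum B (\<lambda>j. d j \<otimes>\<^bsub>B\<^esub> y j) {..<m}"
            have xB: "x \<in> carrier B" unfolding x_def
              using dB yB by (intro B.finsum_closed) auto
            have px: "p \<otimes>\<^bsub>B\<^esub> x = \<one>\<^bsub>B\<^esub>" using one x_def by simp
            have xp: "x \<otimes>\<^bsub>B\<^esub> p = \<one>\<^bsub>B\<^esub>" using px B.m_comm[OF pB xB] by simp
            have "p \<in> Units B" unfolding Units_def using pB xB px xp by blast
            then have "p \<in> Units ?R" using assms(6) pA by auto
            then show ?thesis using pnu by simp
          qed
        qed
      qed
    qed
  qed
  show ?thesis
  proof (intro ballI impI)
    fix b s assume "b \<in> carrier B" "s \<in> A" "s \<noteq> \<zero>\<^bsub>B\<^esub>" "s \<otimes>\<^bsub>B\<^esub> b \<in> A"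
    then have "s \<in> carrier (mult_of ?R)" by simp
    then have "\<forall>b\<in>carrier B. s \<otimes>\<^bsub>B\<^esub> b \<in> A \<longrightarrow> b \<in> A" by (rule main)
    then show "b \<in> A" using \<open>b \<in> carrier B\<close> \<open>s \<otimes>\<^bsub>B\<^esub> b \<in> A\<close> by blast
  qed
qed

end
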